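(* Let $F \subseteq \mathsf{L}_\mu$ and let $\mu\phi \in \Pi(F)$. Then there exist a formula $\mu\psi \in F$, a set of variables $V$ and a substitution $\theta\colon V \to \Pi(F)$ such that $\phi = \psi[\theta]$.
   Context: Formulas of the modal $\mu$-calculus ($\mathsf{L}_\mu$) are built from a countable set $\mathsf{Var}$ of variables and negated variables $\neg x$ ($x\in\mathsf{Var}$), together called literals, by the grammar: literals, $\square\alpha$, $\diamond\alpha$, $\bigwedge\Gamma$, $\bigvee\Gamma$ for finite sets $\Gamma$ of formulas, and $\mu\phi$, $\nu\phi$ for predicates $\phi=\lambda x.\alpha$ where $\alpha$ is $x$-positive (i.e. $\neg x$ does not occur in $\alpha$). Formulas and predicates are identified up to renaming of bound variables. Negation is the involution $\alpha\mapsto\alpha^\bot$ with $x^\bot=\neg x$, $(\neg x)^\bot=x$, $(\bigwedge\Gamma)^\bot=\bigvee\{\gamma^\bot:\gamma\in\Gamma\}$, $(\square\alpha)^\bot=\diamond\alpha^\bot$, $(\mu\lambda x.\alpha)^\bot=\nu\lambda x.(\alpha[x:=\neg x])^\bot$, and duals. A substitution is a map $\theta\colon V\to\mathsf{L}_\mu$ with $V\subseteq\mathsf{Var}$; $\eta[\theta]$ is the simultaneous capture-avoiding substitution of $\theta(x)$ for free occurrences of $x$ in $\eta$, where an occurrence $\neg x$ with $x\in V$ is replaced by $\theta(x)^\bot$; for predicates $(\lambda y.\alpha)[\theta]=\lambda y.\alpha[\theta]$ with $y$ fresh. A formula is $V$-positive if $\neg x$ does not occur in it for every $x\in V$. For $F\subseteq\mathsf{L}_\mu$,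 $\Pi(F)$ is the smallest set of formulas such that: (1) $F$ and all literals belong to $\Pi(F)$; (2) if $\Gamma\subseteq\Pi(F)$ finite then $\bigvee\Gamma,\bigwedge\Gamma\in\Pi(F)$; (3) if $\alpha\in\Pi(F)$ then $\square\alpha,\diamond\alpha\in\Pi(F)$; (4) if $\phi=\lambda x.\alpha$ with $\alpha\in\Pi(F)$ then $\nu\phi\in\Pi(F)$; (5) if $\alpha\in\Pi(F)$ is $V$-positive and $\theta\colon V\to\Pi(F)$, then $\alpha[\theta]\in\Pi(F)$. *)

theory Defs
  imports Main "HOL-Library.FSet"
begin

(* Locally nameless representation of the modal mu-calculus.
   Free variables are named (Var = nat); bound variables are de Bruijn indices.
   Thus formulas identified up to renaming of bound variables are represented
   by syntactic equality.  Bound variables only ever occur positively, since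
   the body of a fixpoint must be positive in the bound variable.
   A predicate lambda x. alpha is represented by its body (with x as BVar 0). *)

type_synonym var = nat

datatype form =
    FVar var
  | NVar var
  | BVar nat
  | Box form
  | Dia form
  | Conj "form fset"
  | Disj "form fset"
  | Mu form
  | Nu form

primrec wf :: "form \<Rightarrow> nat \<Rightarrow> bool" where
  "wf (FVar x) n = True"
| "wf (NVar x) n = True"
| "wf (BVar i) n = (i < n)"
| "wf (Box a) n = wf a n"
| "wf (Dia a) n = wf a n"
| "wf (Conj G) n = (\<forall>b \<in> fset (fimage (\<lambda>g. wf g n) G). b)"
| "wf (Disj G) n = (\<forall>b \<in> fset (fimage (\<lambda>g. wf g n) G). b)"
| "wf (Mu a) n = wf a (Suc n)"
| "wf (Nu a) n = wf a (Suc n)"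

definition Lmu :: "form set" where
  "Lmu = {a. wf a 0}"

primrec nvars :: "form \<Rightarrow> var set" where
  "nvars (FVar x) = {}"
| "nvars (NVar x) = {x}"
| "nvars (BVar i) = {}"
| "nvars (Box a) = nvars a"
| "nvars (Dia a) = nvars a"
| "nvars (Conj G) = \<Union> (fset (fimage nvars G))"
| "nvars (Disj G) = \<Union> (fset (fimage nvars G))"
| "nvars (Mu a) = nvars a"
| "nvars (Nu a) = nvars a"

definition positive :: "var set \<Rightarrow> form \<Rightarrow> bool" where
  "positive V a \<longleftrightarrow> nvars a \<inter> V = {}"

primrec dual :: "form \<Rightarrow> form" where
  "dual (FVar x) = NVar x"
| "dual (NVar x) = FVar x"
| "dual (BVar i) = BVar i"
| "dual (Box a) = Dia (dual a)"
| "dual (Dia a) = Box (dual a)"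
| "dual (Conj G) = Disj (fimage dual G)"
| "dual (Disj G) = Conj (fimage dual G)"
| "dual (Mu a) = Nu (dual a)"
| "dual (Nu a) = Mu (dual a)"

(* simultaneous substitution eta[theta] for theta : V \<rightarrow> L_mu;
   capture avoidance is automatic in the locally nameless representation *)
primrec subst :: "var set \<Rightarrow> (var \<Rightarrow> form) \<Rightarrow> form \<Rightarrow> form" where
  "subst V \<theta> (FVar x) = (if x \<in> V then \<theta> x else FVar x)"
| "subst V \<theta> (NVar x) = (if x \<in> V then dual (\<theta> x) else NVar x)"
| "subst V \<theta> (BVar i) = BVar i"
| "subst V \<theta> (Box a) = Box (subst V \<theta> a)"
| "subst V \<theta> (Dia a) = Dia (subst V \<theta> a)"
| "subst V \<theta> (Conj G) = Conj (fimage (subst V \<theta>) G)"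
| "subst V \<theta> (Disj G) = Disj (fimage (subst V \<theta>) G)"
| "subst V \<theta> (Mu a) = Mu (subst V \<theta> a)"
| "subst V \<theta> (Nu a) = Nu (subst V \<theta> a)"

(* abstraction: turn free variable x into the bound variable at depth k;
   the predicate lambda x. alpha is represented by close_at 0 x alpha *)
primrec close_at :: "nat \<Rightarrow> var \<Rightarrow> form \<Rightarrow> form" where
  "close_at k x (FVar y) = (if y = x then BVar k else FVar y)"
| "close_at k x (NVar y) = NVar y"
| "close_at k x (BVar i) = BVar i"
| "close_at k x (Box a) = Box (close_at k x a)"
| "close_at k x (Dia a) = Dia (close_at k x a)"
| "close_at k x (Conj G) = Conj (fimage (close_at k x) G)"
| "close_at k x (Disj G) = Disj (fimage (close_at k x) G)"
| "close_at k x (Mu a) = Mu (close_at (Suc k) x a)"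
| "close_at k x (Nu a) = Nu (close_at (Suc k) x a)"

inductive_set Pi :: "form set \<Rightarrow> form set" for F :: "form set" where
  base: "a \<in> F \<Longrightarrow> a \<in> Pi F"
| lit_pos: "FVar x \<in> Pi F"
| lit_neg: "NVar x \<in> Pi F"
| disj: "(\<forall>g \<in> fset G. g \<in> Pi F) \<Longrightarrow> Disj G \<in> Pi F"
| conj: "(\<forall>g \<in> fset G. g \<in> Pi F) \<Longrightarrow> Conj G \<in> Pi F"
| box: "a \<in> Pi F \<Longrightarrow> Box a \<in> Pi F"
| dia: "a \<in> Pi F \<Longrightarrow> Dia a \<in> Pi F"
| nu: "a \<in> Pi F \<Longrightarrow> positive {x} a \<Longrightarrow> Nu (close_at 0 x a) \<in> Pi F"
| subst: "a \<in> Pi F \<Longrightarrow> positive V a \<Longrightarrow> (\<forall>x \<in> V. \<theta> x \<in> Pi F)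
          \<Longrightarrow> subst V \<theta> a \<in> Pi F"

end

theory Submission
  imports Defs
begin

lemma nvars_subst_sub:
  "nvars \<psi> \<inter> V' = {} \<Longrightarrow> nvars \<psi> \<subseteq> nvars (subst V' \<theta>' \<psi>)"
proof (induction \<psi>)
  case (Conj G) then show ?case by (fastforce simp:)
next
  case (Disj G) then show ?case by (fastforce simp:)
qed auto

lemma subst_comp:
  "nvars \<psi> \<inter> V' = {} \<Longrightarrow> nvars (subst V' \<theta>' \<psi>) \<inter> V = {} \<Longrightarrow>
   subst V \<theta> (subst V' \<theta>' \<psi>) = subst (V' \<union> V) \<theta>'' \<psi>"
  if th: "\<theta>'' = (\<lambda>x. if x \<in> V' then (if nvars (\<theta>' x) \<inter> V = {} then subst V \<theta> (\<theta>' x) else \<theta>' x) else \<theta> x)"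
proof (induction \<psi>)
  case (FVar x)
  then show ?case by (auto simp add: th)
next
  case (NVar x)
  then show ?case by (simp add: th)
next
  case (Conj G)
  have "\<And>g. g \<in> fset G \<Longrightarrow> subst V \<theta> (subst V' \<theta>' g) = subst (V' \<union> V) \<theta>'' g"
  proof -
    fix g assume g: "g \<in> fset G"
    have "nvars g \<inter> V' = {}" using Conj.prems(1) g by auto
    moreover have "nvars (subst V' \<theta>' g) \<inter> V = {}" using Conj.prems(2) g by auto
    ultimately show "subst V \<theta> (subst V' \<theta>' g) = subst (V' \<union> V) \<theta>'' g" using Conj.IH g by blast
  qed
  then have "fimage (subst V \<theta>) (fimage (subst V' \<theta>') G) = fimage (subst (V' \<union> V) \<theta>'') G"
    by (metis (mono_tags, lifting) fimage_cong fset.map_comp comp_apply)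
  then show ?case by simp
next
  case (Disj G)
  have "\<And>g. g \<in> fset G \<Longrightarrow> subst V \<theta> (subst V' \<theta>' g) = subst (V' \<union> V) \<theta>'' g"
  proof -
    fix g assume g: "g \<in> fset G"
    have "nvars g \<inter> V' = {}" using Disj.prems(1) g by auto
    moreover have "nvars (subst V' \<theta>' g) \<inter> V = {}" using Disj.prems(2) g by auto
    ultimately show "subst V \<theta> (subst V' \<theta>' g) = subst (V' \<union> V) \<theta>'' g" using Disj.IH g by blast
  qed
  then have "fimage (subst V \<theta>) (fimage (subst V' \<theta>') G) = fimage (subst (V' \<union> V) \<theta>'') G"
    by (metis (mono_tags, lifting) fimage_cong fset.map_comp comp_apply)
  then show ?case by simp
qed simp_all

lemma subst_empty: "subst {} \<theta> a = a"
proof (induction a)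
  case (Conj G) then show ?case by (simp add: fset.map_ident_strong)
next
  case (Disj G) then show ?case by (simp add: fset.map_ident_strong)
qed simp_all

lemma main:
  assumes "b \<in> Pi F"
  shows "\<forall>\<phi>. b = Mu \<phi> \<longrightarrow> (\<exists>\<psi> V \<theta>. Mu \<psi> \<in> F \<and> positive V \<psi> \<and> (\<forall>x \<in> V. \<theta> x \<in> Pi F) \<and> \<phi> = subst V \<theta> \<psi>)"
  using assms
proof (induction b rule: Pi.induct)
  case (base a)
  then show ?case
  proof (intro allI impI)
    fix \<phi> assume "a = Mu \<phi>"
    then have "Mu \<phi> \<in> F \<and> positive {} \<phi> \<and> (\<forall>x \<in> {}. (\<lambda>_. \<phi>) x \<in> Pi F) \<and> \<phi> = subst {} (\<lambda>_. \<phi>) \<phi>"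
      using base by (simp add: positive_def subst_empty)
    then show "\<exists>\<psi> V \<theta>. Mu \<psi> \<in> F \<and> positive V \<psi> \<and> (\<forall>x \<in> V. \<theta> x \<in> Pi F) \<and> \<phi> = subst V \<theta> \<psi>"
      by (intro exI[of _ \<phi>] exI[of _ "{}"] exI[of _ "\<lambda>_. \<phi>"])
  qed
next
  case (subst a V \<theta>)
  show ?case
  proof (intro allI impI)
    fix \<phi> assume eq: "subst V \<theta> a = Mu \<phi>"
    show "\<exists>\<psi> V \<theta>. Mu \<psi> \<in> F \<and> positive V \<psi> \<and> (\<forall>x \<in> V. \<theta> x \<in> Pi F) \<and> \<phi> = subst V \<theta> \<psi>"
    proof (cases a)
      case (FVar x)
      then have "x \<in> V" "\<theta> x = Mu \<phi>" using eq by (auto split: if_splits)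
      then have "\<theta> x \<in> Pi F \<and> (\<forall>\<phi>'. \<theta> x = Mu \<phi>' \<longrightarrow> (\<exists>\<psi> V \<theta>. Mu \<psi> \<in> F \<and> positive V \<psi> \<and> (\<forall>x \<in> V. \<theta> x \<in> Pi F) \<and> \<phi>' = subst V \<theta> \<psi>))"
        using bspec[OF subst(4) \<open>x \<in> V\<close>] by simp
      then show ?thesis using \<open>\<theta> x = Mu \<phi>\<close> by blast
    next
      case (NVar x)
      then have "x \<notin> V" using subst(2) by (auto simp add: positive_def)
      then show ?thesis using eq NVar by simp
    next
      case (Mu a')
      have "\<exists>\<psi> V \<theta>. Mu \<psi> \<in> F \<and> positive V \<psi> \<and> (\<forall>x \<in> V. \<theta> x \<in> Pi F) \<and> a' = subst V \<theta> \<psi>"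
        using subst(3) Mu by simp
      then obtain \<psi> V' \<theta>' where h: "Mu \<psi> \<in> F" "positive V' \<psi>" "\<forall>x \<in> V'. \<theta>' x \<in> Pi F"
        "a' = subst V' \<theta>' \<psi>" by (elim exE conjE)
      have \<phi>: "\<phi> = subst V \<theta> a'" using eq Mu by simp
      have pa: "nvars (subst V' \<theta>' \<psi>) \<inter> V = {}" using subst(2) Mu h(4) by (simp add: positive_def)
      define \<theta>'' where "\<theta>'' = (\<lambda>x. if x \<in> V' then (if nvars (\<theta>' x) \<inter> V = {} then subst V \<theta> (\<theta>' x) else \<theta>' x) else \<theta> x)"
      have "\<phi> = subst (V' \<union> V) \<theta>'' \<psi>"
        unfolding \<phi> h(4)
        using subst_comp[OF \<theta>''_def, of \<psi>] h(2) pa by (simp add: positive_def)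
      moreover have "positive (V' \<union> V) \<psi>"
        using h(2) pa nvars_subst_sub[of \<psi> V' \<theta>'] by (auto simp: positive_def)
      moreover have "\<forall>x \<in> V' \<union> V. \<theta>'' x \<in> Pi F"
      proof
        fix x assume x: "x \<in> V' \<union> V"
        have tV: "\<forall>y\<in>V. \<theta> y \<in> Pi F" using subst(4) by blast
        show "\<theta>'' x \<in> Pi F"
        proof (cases "x \<in> V'")
          case True
          then have t: "\<theta>' x \<in> Pi F" using h(3) by blast
          show ?thesis
          proof (cases "nvars (\<theta>' x) \<inter> V = {}")
            case True
            then have "subst V \<theta> (\<theta>' x) \<in> Pi F"
              using Pi.subst[OF t _ tV] by (simp add: positive_def)
            then show ?thesis using True \<open>x \<in> V'\<close> by (simp add: \<theta>''_def)
          qed (use t \<open>x \<in> V'\<close> in \<open>simp add: \<theta>''_def\<close>)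
        next
          case False
          then show ?thesis using x tV by (simp add: \<theta>''_def)
        qed
      qed
      ultimately show ?thesis using h(1) by (intro exI[of _ \<psi>] exI[of _ "V' \<union> V"] exI[of _ \<theta>''] conjI)
    qed (use eq in simp_all)
  qed
qed (simp_all (no_asm))

theorem lemma2p1:
  fixes F :: "form set" and \<phi> :: form
  assumes "F \<subseteq> Lmu"
    and "Mu \<phi> \<in> Pi F"
  shows "\<exists>\<psi> V \<theta>. Mu \<psi> \<in> F \<and> (\<forall>x \<in> V. \<theta> x \<in> Pi F) \<and> \<phi> = subst V \<theta> \<psi>"
proof -
  obtain \<psi> V \<theta> where "Mu \<psi> \<in> F \<and> positive V \<psi> \<and> (\<forall>x \<in> V. \<theta> x \<in> Pi F) \<and> \<phi> = subst V \<theta> \<psi>"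
    using main[OF assms(2)] by auto
  then show ?thesis by auto
qed

end
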